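(* Let $r\geq2$ and let $F$ be an $r$-graph. Let $c,a>0$ be fixed constants such that $c\cdot n^a\leq\mathit{ex}(n,F)$, and suppose that $d=d(n)$ satisfies $d=\Omega(1)$ and $d=o(n^{a-1})$. Then any $F$-freeness tester in $r$-graphs must perform $\Omega(n^{1-1/a}d^{-1/a})$ queries, when restricted to input $r$-graphs on $n$ vertices of average degree $d\pm o(d)$.
   Context: $\mathit{ex}(n,F)$ is the maximum number of edges of an $F$-free $r$-graph on $n$ vertices ($F$-free: containing no subgraph isomorphic to $F$). Testing model (general $r$-graphs model): the input is an $r$-graph $G$ on $n$ vertices with $m$ edges, where for each vertex the incident edges are ordered. An algorithm accesses $G$ only through queries: a vertex-set query asks whether a given $r$-set of vertices is an edge; a neighbour query asks, for a vertex $v$ and integer $i$, for the $i$-th edge incident to $v$ (returned as the other $r-1$ vertices, or an error if $\deg(v)<i$). $G$ is $\varepsilon$-far from a property $\mathcal P$ if at least $\varepsilon m$ edges must be added or deleted to obtain an $r$-graph in $\mathcal P$. A tester for $\mathcal P$ is a (possibly randomized) algorithm given a distance parameter $\varepsilon$ and query access to $G$ that accepts with probability at least $2/3$ if $G\in\mathcal P$ and rejects with probability at least $2/3$ if $G$ is $\varepsilon$-far from $\mathcal P$. Its query complexity is the number of queries performed. *)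

theory Defs
  imports "HOL-Probability.Probability_Mass_Function" "HOL-Library.Landau_Symbols"
begin

definition rgraph_on :: "nat \<Rightarrow> nat set \<Rightarrow> nat set set \<Rightarrow> bool" where
  "rgraph_on r V E \<longleftrightarrow> finite V \<and> (\<forall>e\<in>E. e \<subseteq> V \<and> card e = r)"

definition contains_copy :: "nat \<Rightarrow> nat set set \<Rightarrow> nat set \<Rightarrow> nat set set \<Rightarrow> bool" where
  "contains_copy n E VF EF \<longleftrightarrow>
     (\<exists>f. inj_on f VF \<and> f ` VF \<subseteq> {..<n} \<and> (\<forall>e\<in>EF. f ` e \<in> E))"

definition F_free :: "nat \<Rightarrow> nat set \<Rightarrow> nat set set \<Rightarrow> nat set set \<Rightarrow> bool" where
  "F_free n VF EF E \<longleftrightarrow> \<not> contains_copy n E VF EF"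

definition ex :: "nat \<Rightarrow> nat set \<Rightarrow> nat set set \<Rightarrow> nat \<Rightarrow> nat" where
  "ex r VF EF n = Max {card E | E. rgraph_on r {..<n} E \<and> F_free n VF EF E}"

text \<open>An input is an edge set together with, for each vertex, the ordered list of its
  incident edges.\<close>
type_synonym input = "nat set set \<times> (nat \<Rightarrow> nat set list)"

definition valid_input :: "nat \<Rightarrow> nat \<Rightarrow> input \<Rightarrow> bool" where
  "valid_input r n G \<longleftrightarrow> rgraph_on r {..<n} (fst G) \<and>
     (\<forall>v<n. distinct (snd G v) \<and> set (snd G v) = {e \<in> fst G. v \<in> e}) \<and>
     (\<forall>v\<ge>n. snd G v = [])"

definition avg_deg :: "nat \<Rightarrow> nat \<Rightarrow> input \<Rightarrow> real" where
  "avg_deg r n G = real r * real (card (fst G)) / real n"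

datatype query = VQ "nat set" | NQ nat nat

datatype answer = Bool bool | Nbr "nat set option"

text \<open>Vertex-set query: is S an edge? Neighbour query (v,i): the i-th edge (1-based)
  incident to v, returned as the other r-1 vertices, or an error (None) if deg v < i.\<close>
fun ans :: "input \<Rightarrow> query \<Rightarrow> answer" where
  "ans G (VQ S) = Bool (S \<in> fst G)"
| "ans G (NQ v i) = Nbr (if 1 \<le> i \<and> i \<le> length (snd G v)
                         then Some (snd G v ! (i - 1) - {v}) else None)"

text \<open>A deterministic adaptive algorithm is a decision tree: it either halts with
  an output (True = accept) or asks a query and continues depending on the answer.\<close>
datatype dtree = Leaf bool | Ask query "answer \<Rightarrow> dtree"

primrec run :: "dtree \<Rightarrow> input \<Rightarrow> bool \<times> nat" where
  "run (Leaf b) G = (b, 0)"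
| "run (Ask q k) G = (let res = run (k (ans G q)) G in (fst res, Suc (snd res)))"

text \<open>A randomized algorithm is a probability distribution over decision trees.\<close>
type_synonym ralg = "dtree pmf"

definition accept_prob :: "ralg \<Rightarrow> input \<Rightarrow> real" where
  "accept_prob A G = measure_pmf.prob A {t. fst (run t G)}"

definition eps_far :: "nat \<Rightarrow> nat \<Rightarrow> nat set \<Rightarrow> nat set set \<Rightarrow> real \<Rightarrow> input \<Rightarrow> bool" where
  "eps_far r n VF EF \<epsilon> G \<longleftrightarrow>
     (\<forall>H. rgraph_on r {..<n} H \<and> F_free n VF EF H \<longrightarrow>
          real (card (fst G - H) + card (H - fst G)) \<ge> \<epsilon> * real (card (fst G)))"

definition is_tester :: "nat \<Rightarrow> nat \<Rightarrow> nat set \<Rightarrow> nat set set \<Rightarrow> (input \<Rightarrow> bool) \<Rightarrow> real \<Rightarrow> ralg \<Rightarrow> bool" where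
  "is_tester r n VF EF Cls \<epsilon> A \<longleftrightarrow>
     (\<forall>G. valid_input r n G \<and> Cls G \<longrightarrow>
        (F_free n VF EF (fst G) \<longrightarrow> accept_prob A G \<ge> 2/3) \<and>
        (eps_far r n VF EF \<epsilon> G \<longrightarrow> 1 - accept_prob A G \<ge> 2/3))"

definition query_bound :: "nat \<Rightarrow> nat \<Rightarrow> (input \<Rightarrow> bool) \<Rightarrow> ralg \<Rightarrow> nat \<Rightarrow> bool" where
  "query_bound r n Cls A q \<longleftrightarrow>
     (\<forall>G. valid_input r n G \<and> Cls G \<longrightarrow> (\<forall>t\<in>set_pmf A. snd (run t G) \<le> q))"

definition deg_class :: "nat \<Rightarrow> nat \<Rightarrow> real \<Rightarrow> real \<Rightarrow> input \<Rightarrow> bool" where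
  "deg_class r n d \<eta> G \<longleftrightarrow> (1 - \<eta>) * d \<le> avg_deg r n G \<and> avg_deg r n G \<le> (1 + \<eta>) * d"

end

theory Submission
  imports Defs
begin

fun qkey :: "query \<Rightarrow> nat set" where
  "qkey (VQ S) = {Min S}"
| "qkey (NQ v i) = {v}"

fun keys :: "nat \<Rightarrow> dtree \<Rightarrow> input \<Rightarrow> nat set" where
  "keys 0 t G = {}"
| "keys (Suc j) (Leaf b) G = {}"
| "keys (Suc j) (Ask q k) G = qkey q \<union> keys j (k (ans G q)) G"

lemma keys_fin: "finite (keys j t G) \<and> card (keys j t G) \<le> j"
proof (induction j t G rule: keys.induct)
  case (3 j q k G)
  have "card (qkey q) \<le> 1" by (cases q) auto
  moreover have "finite (qkey q)" by (cases q) auto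
  ultimately show ?case using 3 card_Un_le[of "qkey q" "keys j (k (ans G q)) G"] by auto
qed auto

lemma run_agree:
  assumes "\<And>qq. qkey qq \<inter> X = {} \<Longrightarrow> ans G qq = ans G0 qq"
  shows "keys j t G0 \<inter> X = {} \<Longrightarrow> snd (run t G) < j \<Longrightarrow> run t G = run t G0"
proof (induction t arbitrary: j)
  case (Leaf b) then show ?case by simp
next
  case (Ask q k)
  then obtain j' where j: "j = Suc j'" by (cases j) auto
  have a: "qkey q \<inter> X = {}" using Ask.prems j by auto
  then have e: "ans G q = ans G0 q" using assms by blast
  have "keys j' (k (ans G0 q)) G0 \<inter> X = {}" using Ask.prems j by auto
  moreover have "snd (run (k (ans G0 q)) G) < j'" using Ask.prems j e by (simp add: Let_def)
  ultimately have "run (k (ans G0 q)) G = run (k (ans G0 q)) G0"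
    using Ask.IH by blast
  then show ?case by (simp add: e Let_def)
qed

definition G0 :: input where "G0 = ({}, \<lambda>v. [])"

lemma ans_agree:
  assumes "valid_input r n G" "r \<ge> 1" "\<forall>e\<in>fst G. e \<subseteq> X" "qkey qq \<inter> X = {}"
  shows "ans G qq = ans G0 qq"
proof (cases qq)
  case (VQ S)
  have "S \<notin> fst G"
  proof
    assume S: "S \<in> fst G"
    then have "card S = r" "S \<subseteq> X" using assms(1,3) by (auto simp: valid_input_def rgraph_on_def)
    then have "finite S" "S \<noteq> {}" using assms(2) by (auto intro: card_ge_0_finite)
    then have "Min S \<in> X" using \<open>S \<subseteq> X\<close> Min_in by blast
    then show False using assms(4) VQ by auto
  qed
  then show ?thesis using VQ by (simp add: G0_def)
next
  case (NQ v i)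
  have "snd G v = []"
  proof (cases "v < n")
    case True
    then have "set (snd G v) = {e \<in> fst G. v \<in> e}" using assms(1) by (auto simp: valid_input_def)
    also have "\<dots> = {}" using assms(3,4) NQ by auto
    finally show ?thesis by simp
  next
    case False then show ?thesis using assms(1) by (auto simp: valid_input_def)
  qed
  then show ?thesis using NQ by (simp add: G0_def)
qed

definition mk :: "nat \<Rightarrow> nat set set \<Rightarrow> input" where
  "mk n E = (E, \<lambda>v. if v < n then (SOME xs. set xs = {e \<in> E. v \<in> e} \<and> distinct xs) else [])"

lemma mk_valid:
  assumes "rgraph_on r {..<n} E"
  shows "valid_input r n (mk n E)"
proof -
  have "finite E"
    by (rule finite_subset[of E "Pow {..<n}"]) (use assms in \<open>auto simp: rgraph_on_def\<close>)
  then have "\<exists>xs. set xs = {e \<in> E. v \<in> e} \<and> distinct xs" for v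
    using finite_distinct_list[of "{e \<in> E. v \<in> e}"] by auto
  then have "set (SOME xs. set xs = {e \<in> E. v \<in> e} \<and> distinct xs) = {e \<in> E. v \<in> e} \<and>
      distinct (SOME xs. set xs = {e \<in> E. v \<in> e} \<and> distinct xs)" for v
    by (rule someI_ex)
  then show ?thesis using assms by (auto simp: valid_input_def mk_def)
qed


lemma rsets_finite: "finite {E. rgraph_on r {..<k} E}"
proof -
  have "{E. rgraph_on r {..<k} E} \<subseteq> Pow (Pow {..<k})" by (auto simp: rgraph_on_def)
  then show ?thesis by (rule finite_subset) auto
qed

lemma rgraph_card_le:
  assumes "rgraph_on r {..<k} E" shows "card E \<le> k choose r"
proof -
  have "E \<subseteq> {B. B \<subseteq> {..<k} \<and> card B = r}" using assms by (auto simp: rgraph_on_def)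
  then have "card E \<le> card {B. B \<subseteq> {..<k} \<and> card B = r}"
    by (rule card_mono[rotated]) auto
  then show ?thesis using n_subsets[of "{..<k}" r] by simp
qed

lemma ex_attained:
  assumes "EF \<noteq> {}"
  shows "\<exists>E0. rgraph_on r {..<k} E0 \<and> F_free k VF EF E0 \<and> card E0 = ex r VF EF k"
proof -
  let ?S = "{card E | E. rgraph_on r {..<k} E \<and> F_free k VF EF E}"
  have "finite ?S"
    using rsets_finite[of r k] by (auto intro: finite_subset[of _ "card ` {E. rgraph_on r {..<k} E}"])
  moreover have "0 \<in> ?S"
  proof -
    have "rgraph_on r {..<k} {}" by (simp add: rgraph_on_def)
    moreover have "F_free k VF EF {}" using assms by (auto simp: F_free_def contains_copy_def)
    ultimately show ?thesis by force
  qed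
  ultimately have "ex r VF EF k \<in> ?S" unfolding ex_def by (intro Max_in) auto
  then show ?thesis by auto
qed

lemma F_free_mono: "F_free n VF EF E \<Longrightarrow> E' \<subseteq> E \<Longrightarrow> F_free n VF EF E'"
  unfolding F_free_def contains_copy_def by blast

lemma F_free_transport:
  assumes free: "F_free k VF EF E0" and fin: "finite VF" and vk: "card VF \<le> k"
    and FE: "\<forall>e\<in>EF. e \<subseteq> VF"
    and E0: "\<forall>e\<in>E0. e \<subseteq> {..<k}" and h: "inj_on h {..<k}"
  shows "F_free n VF EF ((`) h ` E0)"
  unfolding F_free_def contains_copy_def
proof
  assume "\<exists>f. inj_on f VF \<and> f ` VF \<subseteq> {..<n} \<and> (\<forall>e\<in>EF. f ` e \<in> (`) h ` E0)"
  then obtain f where f: "inj_on f VF" and fe: "\<forall>e\<in>EF. f ` e \<in> (`) h ` E0" by blast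
  define W where "W = {x\<in>VF. f x \<in> h ` {..<k}}"
  define U where "U = VF - W"
  define g1 where "g1 = (\<lambda>x. inv_into {..<k} h (f x))"
  have g1inj: "inj_on g1 W"
  proof (rule inj_onI)
    fix x y assume xy: "x \<in> W" "y \<in> W" "g1 x = g1 y"
    then have "f x \<in> h ` {..<k}" "f y \<in> h ` {..<k}" by (auto simp: W_def)
    then have "h (g1 x) = f x" "h (g1 y) = f y" unfolding g1_def
      by (auto simp only: f_inv_into_f)
    then have "f x = f y" using xy by simp
    then show "x = y" using f xy by (auto simp: W_def inj_on_def)
  qed
  have g1rng: "g1 ` W \<subseteq> {..<k}" unfolding g1_def W_def using inv_into_into[of _ h "{..<k}"] by blast
  have fW: "finite W" "finite U" using fin by (auto simp: W_def U_def)
  have WV: "W \<subseteq> VF" by (auto simp: W_def)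
  have cWU: "card W + card U = card VF"
    using card_Diff_subset[OF fW(1) WV] card_mono[OF fin WV] by (simp add: U_def)
  have "card (g1 ` W) = card W" using card_image[OF g1inj] .
  then have "card ({..<k} - g1 ` W) = k - card W" using g1rng
    by (simp add: card_Diff_subset finite_subset)
  then have "card U \<le> card ({..<k} - g1 ` W)" using cWU vk by simp
  then obtain Z where Z: "Z \<subseteq> {..<k} - g1 ` W" "card Z = card U"
    by (meson obtain_subset_with_card_n)
  then have "finite Z" by (meson finite_Diff finite_lessThan finite_subset)
  then obtain \<sigma> where \<sigma>: "bij_betw \<sigma> U Z" using Z fW finite_same_card_bij by metis
  define g where "g = (\<lambda>x. if x \<in> W then g1 x else \<sigma> x)"
  have "inj_on g VF"
  proof (rule inj_onI)
    fix x y assume xy: "x \<in> VF" "y \<in> VF" "g x = g y"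
    show "x = y"
    proof (cases "x \<in> W"; cases "y \<in> W")
      assume "x \<in> W" "y \<in> W" then show ?thesis using xy g1inj by (auto simp: g_def inj_on_def)
    next
      assume "x \<notin> W" "y \<notin> W"
      then have "x \<in> U" "y \<in> U" using xy by (auto simp: U_def)
      then show ?thesis using xy \<sigma> \<open>x \<notin> W\<close> \<open>y \<notin> W\<close> by (auto simp: g_def bij_betw_def inj_on_def)
    next
      assume "x \<in> W" "y \<notin> W"
      then have "y \<in> U" using xy by (auto simp: U_def)
      then have "\<sigma> y \<in> Z" using \<sigma> bij_betwE by blast
      then have "\<sigma> y \<notin> g1 ` W" using Z by blast
      moreover have "g x = g1 x" "g y = \<sigma> y" using \<open>x \<in> W\<close> \<open>y \<notin> W\<close> by (auto simp: g_def)
      ultimately show ?thesis using xy \<open>x \<in> W\<close> by (metis image_eqI)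
    next
      assume "x \<notin> W" "y \<in> W"
      then have "x \<in> U" using xy by (auto simp: U_def)
      then have "\<sigma> x \<in> Z" using \<sigma> bij_betwE by blast
      then have "\<sigma> x \<notin> g1 ` W" using Z by blast
      moreover have "g y = g1 y" "g x = \<sigma> x" using \<open>y \<in> W\<close> \<open>x \<notin> W\<close> by (auto simp: g_def)
      ultimately show ?thesis using xy \<open>y \<in> W\<close> by (metis image_eqI)
    qed
  qed
  moreover have "g ` VF \<subseteq> {..<k}"
  proof
    fix y assume "y \<in> g ` VF"
    then obtain x where x: "x \<in> VF" "y = g x" by auto
    show "y \<in> {..<k}"
    proof (cases "x \<in> W")
      case True then show ?thesis using x g1rng by (auto simp: g_def)
    next
      case False
      then have "x \<in> U" using x by (auto simp: U_def)
      then have "\<sigma> x \<in> Z" using \<sigma> bij_betwE by blast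
      then show ?thesis using x Z False by (auto simp: g_def)
    qed
  qed
  moreover have "\<forall>e\<in>EF. g ` e \<in> E0"
  proof
    fix e assume e: "e \<in> EF"
    then obtain e' where e': "e' \<in> E0" "f ` e = h ` e'" using fe by auto
    have eW: "e \<subseteq> W"
    proof
      fix x assume "x \<in> e"
      then have "f x \<in> h ` e'" "x \<in> VF" using e' e FE by auto
      then show "x \<in> W" using E0 e' by (auto simp: W_def)
    qed
    have "g ` e = g1 ` e" using eW by (auto simp: g_def)
    also have "\<dots> = inv_into {..<k} h ` (f ` e)" by (auto simp: g1_def)
    also have "\<dots> = e'" using e' E0 h by (simp add: inv_into_image_cancel)
    finally show "g ` e \<in> E0" using e' by simp
  qed
  ultimately have "contains_copy k E0 VF EF" unfolding contains_copy_def by blast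
  then show False using free by (simp add: F_free_def)
qed


lemma supersets_card:
  assumes "finite T" "e \<subseteq> T" "card e = r" "r \<le> v"
  shows "card {S. S \<subseteq> T \<and> card S = v \<and> e \<subseteq> S} = (card T - r) choose (v - r)"
proof -
  have fe: "finite e" using assms(1,2) finite_subset by blast
  have "bij_betw (\<lambda>S. S - e) {S. S \<subseteq> T \<and> card S = v \<and> e \<subseteq> S} {U. U \<subseteq> T - e \<and> card U = v - r}"
  proof (rule bij_betw_byWitness[where f'="\<lambda>U. U \<union> e"])
    show "\<forall>a\<in>{S. S \<subseteq> T \<and> card S = v \<and> e \<subseteq> S}. a - e \<union> e = a" by auto
    show "\<forall>a'\<in>{U. U \<subseteq> T - e \<and> card U = v - r}. a' \<union> e - e = a'" by auto
    show "(\<lambda>S. S - e) ` {S. S \<subseteq> T \<and> card S = v \<and> e \<subseteq> S} \<subseteq> {U. U \<subseteq> T - e \<and> card U = v - r}"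
    proof
      fix U assume "U \<in> (\<lambda>S. S - e) ` {S. S \<subseteq> T \<and> card S = v \<and> e \<subseteq> S}"
      then obtain S where S: "S \<subseteq> T" "e \<subseteq> S" "v = card S" "U = S - e" by auto
      then have "finite S" using assms(1) finite_subset by blast
      then show "U \<in> {U. U \<subseteq> T - e \<and> card U = v - r}" using S assms(3) card_Diff_subset fe by auto
    qed
    show "(\<lambda>U. U \<union> e) ` {U. U \<subseteq> T - e \<and> card U = v - r} \<subseteq> {S. S \<subseteq> T \<and> card S = v \<and> e \<subseteq> S}"
    proof
      fix S assume "S \<in> (\<lambda>U. U \<union> e) ` {U. U \<subseteq> T - e \<and> card U = v - r}"
      then obtain U where U: "U \<subseteq> T - e" "v - r = card U" "S = U \<union> e" by auto
      then have "finite U" using assms(1) finite_subset by blast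
      then have "card (U \<union> e) = card U + card e" using U fe by (intro card_Un_disjoint) auto
      then show "S \<in> {S. S \<subseteq> T \<and> card S = v \<and> e \<subseteq> S}" using U assms by auto
    qed
  qed
  then have "card {S. S \<subseteq> T \<and> card S = v \<and> e \<subseteq> S} = card {U. U \<subseteq> T - e \<and> card U = v - r}"
    by (rule bij_betw_same_card)
  also have "\<dots> = card (T - e) choose (v - r)" using assms(1) by (intro n_subsets) auto
  also have "card (T - e) = card T - r" using assms fe card_Diff_subset by auto
  finally show ?thesis .
qed

lemma complete_far:
  assumes FG: "rgraph_on r VF EF" and EF: "EF \<noteq> {}" and fT: "finite T" and Tn: "T \<subseteq> {..<n}"
    and vs: "card VF \<le> card T" and free: "F_free n VF EF H"
  shows "card T choose r \<le> card ({e. e \<subseteq> T \<and> card e = r} - H) * (card VF choose r)"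
proof -
  define v where "v = card VF"
  define s where "s = card T"
  define M where "M = {e. e \<subseteq> T \<and> card e = r} - H"
  define Sv where "Sv = {S. S \<subseteq> T \<and> card S = v}"
  have fVF: "finite VF" using FG by (simp add: rgraph_on_def)
  obtain e0 where "e0 \<in> EF" using EF by auto
  then have "e0 \<subseteq> VF" "card e0 = r" using FG by (auto simp: rgraph_on_def)
  then have rv: "r \<le> v" unfolding v_def using card_mono[OF fVF] by auto
  have fSv: "finite Sv" unfolding Sv_def using fT by (auto intro: finite_subset[of _ "Pow T"])
  have fM: "finite M" unfolding M_def using fT by (auto intro: finite_subset[of _ "Pow T"])
  have hit: "\<exists>e\<in>M. e \<subseteq> S" if S: "S \<in> Sv" for S
  proof -
    have fS: "finite S" using S fT unfolding Sv_def using finite_subset by blast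
    have "card VF = card S" using S unfolding Sv_def v_def by simp
    then obtain f where f: "bij_betw f VF S" using finite_same_card_bij[OF fVF fS] by blast
    then have "inj_on f VF" "f ` VF \<subseteq> {..<n}" using S Tn unfolding Sv_def bij_betw_def by auto
    then obtain e where e: "e \<in> EF" "f ` e \<notin> H" using free unfolding F_free_def contains_copy_def by blast
    have eV: "e \<subseteq> VF" "card e = r" using e FG by (auto simp: rgraph_on_def)
    then have "card (f ` e) = r" using \<open>inj_on f VF\<close> by (metis card_image inj_on_subset)
    moreover have "f ` e \<subseteq> S" using eV f by (auto simp: bij_betw_def)
    ultimately have "f ` e \<in> M" "f ` e \<subseteq> S" using e S unfolding M_def Sv_def by auto
    then show ?thesis by blast
  qed
  have "s choose v = card Sv" unfolding Sv_def s_def using n_subsets[OF fT] by simp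
  also have "\<dots> = (\<Sum>S\<in>Sv. 1)" by simp
  also have "\<dots> \<le> (\<Sum>S\<in>Sv. card {e. e \<in> M \<and> e \<subseteq> S})"
  proof (rule sum_mono)
    fix S assume "S \<in> Sv"
    then obtain e where "e \<in> M" "e \<subseteq> S" using hit by blast
    moreover have "finite {e. e \<in> M \<and> e \<subseteq> S}" using fM by simp
    ultimately show "1 \<le> card {e. e \<in> M \<and> e \<subseteq> S}"
      by (metis (mono_tags, lifting) One_nat_def Suc_leI card_gt_0_iff empty_iff mem_Collect_eq)
  qed
  also have "\<dots> = (\<Sum>S\<in>Sv. \<Sum>e\<in>{e. e \<in> M \<and> e \<subseteq> S}. 1)" by simp
  also have "\<dots> = (\<Sum>e\<in>M. \<Sum>S\<in>{S. S \<in> Sv \<and> e \<subseteq> S}. 1)"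
    by (rule sum.swap_restrict[OF fSv fM])
  also have "\<dots> = (\<Sum>e\<in>M. (s - r) choose (v - r))"
  proof (rule sum.cong[OF refl])
    fix e assume e: "e \<in> M"
    then have "e \<subseteq> T" "card e = r" unfolding M_def by auto
    have "{S. S \<in> Sv \<and> e \<subseteq> S} = {S. S \<subseteq> T \<and> card S = v \<and> e \<subseteq> S}" unfolding Sv_def by auto
    then show "(\<Sum>S\<in>{S. S \<in> Sv \<and> e \<subseteq> S}. 1) = (s - r) choose (v - r)"
      using supersets_card[OF fT \<open>e \<subseteq> T\<close> \<open>card e = r\<close> rv] unfolding s_def by simp
  qed
  also have "\<dots> = card M * ((s - r) choose (v - r))" by simp
  finally have A: "s choose v \<le> card M * ((s - r) choose (v - r))" .
  have vs': "v \<le> s" using vs unfolding v_def s_def .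
  have B: "(s choose v) * (v choose r) = (s choose r) * ((s - r) choose (v - r))"
    using choose_mult[OF rv vs'] .
  have pos: "(s - r) choose (v - r) > 0" using rv vs' by (intro zero_less_binomial) simp
  have "(s choose r) * ((s - r) choose (v - r)) \<le> card M * ((s - r) choose (v - r)) * (v choose r)"
    using A B by (metis mult_le_mono1)
  then have "(s choose r) * ((s - r) choose (v - r)) \<le> (card M * (v choose r)) * ((s - r) choose (v - r))"
    by (simp add: ac_simps)
  then have "s choose r \<le> card M * (v choose r)" using pos by simp
  then show ?thesis unfolding s_def M_def v_def .
qed


lemma prob_sum_bound:
  fixes A :: "'a pmf" and D :: "nat \<Rightarrow> 'a set"
  assumes "\<And>t. t \<in> set_pmf A \<Longrightarrow> card {j\<in>{..<N}. t \<in> D j} \<le> B"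
  shows "(\<Sum>j<N. measure_pmf.prob A (D j)) \<le> real B"
proof -
  have "(\<Sum>j<N. measure_pmf.prob A (D j)) = (\<Sum>j<N. measure_pmf.expectation A (indicator (D j)))"
    by (simp add: integral_indicator)
  also have "\<dots> = measure_pmf.expectation A (\<lambda>t. \<Sum>j<N. indicator (D j) t)"
    by (rule Bochner_Integration.integral_sum[where I="{..<N}" and M="measure_pmf A" and f="\<lambda>j. indicator (D j)", symmetric])
       (auto intro!: measure_pmf.integrable_const_bound[where B=1])
  also have "\<dots> \<le> real B"
  proof (rule measure_pmf.integral_le_const)
    show "integrable (measure_pmf A) (\<lambda>t. \<Sum>j<N. indicator (D j) t :: real)"
    proof (rule measure_pmf.integrable_const_bound[where B="real N"])
      have "card ({..<N} \<inter> {j. x \<in> D j}) \<le> N" for x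
        by (metis card_lessThan card_mono finite_lessThan inf_le1)
      then show "AE x in measure_pmf A. norm (\<Sum>j<N. indicator (D j) x :: real) \<le> real N"
        by (auto simp: indicator_def sum.If_cases)
    qed auto
    show "AE x in measure_pmf A. (\<Sum>j<N. indicator (D j) x) \<le> real B"
    proof (rule AE_pmfI)
      fix t assume t: "t \<in> set_pmf A"
      have "(\<Sum>j<N. indicator (D j) t :: real) = real (card {j\<in>{..<N}. t \<in> D j})"
        by (simp add: indicator_def sum.If_cases Int_def)
      then show "(\<Sum>j<N. indicator (D j) t) \<le> real B" using assms[OF t] by simp
    qed
  qed
  finally show ?thesis .
qed


lemma inj_image_shift: "inj ((`) (\<lambda>x::nat. x + c))"
  by (rule injI) (simp add: inj_image_eq_iff inj_on_def)

lemma core: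
  fixes A :: ralg
  assumes r2: "r \<ge> 2" and FG: "rgraph_on r VF EF" and EF: "EF \<noteq> {}"
    and vs: "card VF \<le> s" and sk: "s \<le> k" and k0: "0 < k"
    and exk: "s choose r \<le> ex r VF EF k"
    and Cls: "\<forall>G. valid_input r n G \<and> card (fst G) = s choose r \<longrightarrow> Cls G"
    and T: "is_tester r n VF EF Cls (1 / real (card VF choose r)) A"
    and Q: "query_bound r n Cls A q"
  shows "real (n div k) \<le> 3 * (real q + 1)"
proof -
  define N where "N = n div k"
  define m where "m = s choose r"
  define v where "v = card VF"
  have fVF: "finite VF" and FE: "\<forall>e\<in>EF. e \<subseteq> VF" using FG by (auto simp: rgraph_on_def)
  obtain e0 where "e0 \<in> EF" using EF by auto
  then have "e0 \<subseteq> VF" "card e0 = r" using FG by (auto simp: rgraph_on_def)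
  then have rv: "r \<le> v" unfolding v_def using card_mono[OF fVF] by auto
  have vpos: "v choose r > 0" using rv by (simp add: zero_less_binomial)
  obtain E0 where E0: "rgraph_on r {..<k} E0" "F_free k VF EF E0" "card E0 = ex r VF EF k"
    using ex_attained[OF EF] by blast
  obtain E1 where E1: "E1 \<subseteq> E0" "card E1 = m" using exk E0(3) unfolding m_def
    by (metis obtain_subset_with_card_n)
  have E1r: "rgraph_on r {..<k} E1" using E0(1) E1(1) by (auto simp: rgraph_on_def)
  have E1f: "F_free k VF EF E1" using F_free_mono[OF E0(2) E1(1)] .
  define h where "h = (\<lambda>j x. x + j * k)"
  define B where "B = (\<lambda>j. h j ` {..<k})"
  define G1 where "G1 = (\<lambda>j. mk n ((`) (h j) ` E1))"
  define K where "K = (\<lambda>j. {e. e \<subseteq> h j ` {..<s} \<and> card e = r})"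
  define G2 where "G2 = (\<lambda>j. mk n (K j))"
  have hinj: "inj (h j)" for j unfolding h_def by (rule injI) simp
  have Bn: "B j \<subseteq> {..<n}" if "j < N" for j
  proof
    fix x assume "x \<in> B j"
    then obtain y where y: "y < k" "x = y + j * k" unfolding B_def h_def by auto
    have "Suc j * k \<le> N * k" using that by (intro mult_le_mono1) simp
    also have "\<dots> \<le> n" unfolding N_def by simp
    finally show "x \<in> {..<n}" using y by simp
  qed
  have Bdiv: "x div k = j" if "x \<in> B j" for x j
    using that k0 unfolding B_def h_def by auto
  have fst_mk: "fst (mk n E) = E" for E by (simp add: mk_def)
  have G1r: "rgraph_on r {..<n} ((`) (h j) ` E1)" if "j < N" for j
  proof -
    have "\<forall>e\<in>(`) (h j) ` E1. e \<subseteq> B j \<and> card e = r"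
      using E1r hinj unfolding B_def rgraph_on_def by (auto simp: card_image[OF inj_on_subset[OF hinj]])
    then show ?thesis using Bn[OF that] by (auto simp: rgraph_on_def)
  qed
  have G1v: "valid_input r n (G1 j)" if "j < N" for j
    unfolding G1_def by (rule mk_valid[OF G1r[OF that]])
  have G1c: "card (fst (G1 j)) = m" for j
  proof -
    have "inj ((`) (h j))" unfolding h_def by (rule inj_image_shift)
    then show ?thesis unfolding G1_def fst_mk using E1(2) by (simp add: card_image inj_on_subset)
  qed
  have G1B: "\<forall>e\<in>fst (G1 j). e \<subseteq> B j" for j
    using E1r unfolding G1_def fst_mk B_def rgraph_on_def by auto
  have G1free: "F_free n VF EF (fst (G1 j))" for j
  proof -
    have "card VF \<le> k" using vs sk by simp
    then show ?thesis unfolding G1_def fst_mk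
      using F_free_transport[OF E1f fVF _ FE _ inj_on_subset[OF hinj]] E1r
      by (auto simp: rgraph_on_def)
  qed
  have Ts: "card (h j ` {..<s}) = s" for j using card_image[OF inj_on_subset[OF hinj[of j] subset_UNIV]] by simp
  have TB: "h j ` {..<s} \<subseteq> B j" for j using sk unfolding B_def by auto
  have G2r: "rgraph_on r {..<n} (K j)" if "j < N" for j
    using TB[of j] Bn[OF that] unfolding K_def rgraph_on_def by blast
  have G2v: "valid_input r n (G2 j)" if "j < N" for j
    unfolding G2_def by (rule mk_valid[OF G2r[OF that]])
  have G2c: "card (fst (G2 j)) = m" for j
    unfolding G2_def fst_mk K_def m_def using n_subsets[of "h j ` {..<s}" r] Ts by simp
  have G2B: "\<forall>e\<in>fst (G2 j). e \<subseteq> B j" for j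
    using TB[of j] unfolding G2_def fst_mk K_def by blast
  have G2far: "eps_far r n VF EF (1 / real (card VF choose r)) (G2 j)" if "j < N" for j
    unfolding eps_far_def
  proof (intro allI impI)
    fix H assume H: "rgraph_on r {..<n} H \<and> F_free n VF EF H"
    have "s choose r \<le> card (K j - H) * (v choose r)"
      using complete_far[OF FG EF _ _ _ conjunct2[OF H], of "h j ` {..<s}"] Ts TB Bn[OF that] vs
      unfolding K_def v_def by auto
    then have "real (s choose r) \<le> real (card (K j - H)) * real (v choose r)"
      by (metis of_nat_le_iff of_nat_mult)
    then have "real (s choose r) / real (v choose r) \<le> real (card (K j - H))"
      using vpos by (simp add: divide_le_eq)
    then show "1 / real (card VF choose r) * real (card (fst (G2 j)))
        \<le> real (card (fst (G2 j) - H) + card (H - fst (G2 j)))"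
      using G2c[of j] unfolding G2_def fst_mk m_def v_def by simp
  qed
  have acc1: "accept_prob A (G1 j) \<ge> 2/3" if "j < N" for j
    using T Cls G1v[OF that] G1c G1free unfolding is_tester_def m_def by blast
  have acc2: "1 - accept_prob A (G2 j) \<ge> 2/3" if "j < N" for j
    using T Cls G2v[OF that] G2c G2far[OF that] unfolding is_tester_def m_def by blast
  define D where "D = (\<lambda>j. {t. fst (run t (G1 j)) \<noteq> fst (run t (G2 j))})"
  have few: "card {j\<in>{..<N}. t \<in> D j} \<le> Suc q" if t: "t \<in> set_pmf A" for t
  proof -
    have "{j\<in>{..<N}. t \<in> D j} \<subseteq> (\<lambda>x. x div k) ` keys (Suc q) t G0"
    proof
      fix j assume j: "j \<in> {j\<in>{..<N}. t \<in> D j}"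
      show "j \<in> (\<lambda>x. x div k) ` keys (Suc q) t G0"
      proof (rule ccontr)
        assume nj: "j \<notin> (\<lambda>x. x div k) ` keys (Suc q) t G0"
        have disj: "keys (Suc q) t G0 \<inter> B j = {}" using nj Bdiv by force
        have jN: "j < N" using j by simp
        have "run t (G1 j) = run t G0"
        proof (rule run_agree[OF _ disj])
          show "ans (G1 j) qq = ans G0 qq" if "qkey qq \<inter> B j = {}" for qq
            using ans_agree[OF G1v[OF jN] _ G1B that] r2 by simp
          have "snd (run t (G1 j)) \<le> q" using Q Cls G1v[OF jN] G1c t unfolding query_bound_def m_def by blast
          then show "snd (run t (G1 j)) < Suc q" by simp
        qed
        moreover have "run t (G2 j) = run t G0"
        proof (rule run_agree[OF _ disj])
          show "ans (G2 j) qq = ans G0 qq" if "qkey qq \<inter> B j = {}" for qq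
            using ans_agree[OF G2v[OF jN] _ G2B that] r2 by simp
          have "snd (run t (G2 j)) \<le> q" using Q Cls G2v[OF jN] G2c t unfolding query_bound_def m_def by blast
          then show "snd (run t (G2 j)) < Suc q" by simp
        qed
        ultimately show False using j unfolding D_def by simp
      qed
    qed
    then have "card {j\<in>{..<N}. t \<in> D j} \<le> card ((\<lambda>x. x div k) ` keys (Suc q) t G0)"
      using keys_fin by (intro card_mono) auto
    also have "\<dots> \<le> card (keys (Suc q) t G0)" using keys_fin by (intro card_image_le) auto
    also have "\<dots> \<le> Suc q" using keys_fin by auto
    finally show ?thesis .
  qed
  have "real N / 3 = (\<Sum>j<N. 2/3 - 1/3 :: real)" by simp
  also have "\<dots> \<le> (\<Sum>j<N. accept_prob A (G1 j) - accept_prob A (G2 j))"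
    using acc1 acc2 by (intro sum_mono) fastforce
  also have "\<dots> \<le> (\<Sum>j<N. measure_pmf.prob A (D j))"
  proof (rule sum_mono)
    fix j
    have "{t. fst (run t (G1 j))} \<subseteq> {t. fst (run t (G2 j))} \<union> D j" unfolding D_def by auto
    then have "measure_pmf.prob A {t. fst (run t (G1 j))} \<le> measure_pmf.prob A ({t. fst (run t (G2 j))} \<union> D j)"
      by (rule measure_pmf.finite_measure_mono) simp
    also have "\<dots> \<le> measure_pmf.prob A {t. fst (run t (G2 j))} + measure_pmf.prob A (D j)"
      by (rule measure_subadditive) simp_all
    finally show "accept_prob A (G1 j) - accept_prob A (G2 j) \<le> measure_pmf.prob A (D j)"
      unfolding accept_prob_def by simp
  qed
  also have "\<dots> \<le> real (Suc q)" by (rule prob_sum_bound) (rule few)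
  finally show ?thesis unfolding N_def by simp
qed


lemma binom_lower:
  assumes "1 \<le> r" "r \<le> s" shows "real s \<le> real r * real (s choose r)"
proof -
  have r0: "real r > 0" using assms by simp
  have ge1: "real s / real r \<ge> 1" using assms by simp
  have "real s / real r \<le> (real s / real r) ^ r"
    using ge1 assms(1) by (metis power_increasing power_one_right)
  also have "\<dots> \<le> real (s choose r)" using binomial_ge_n_over_k_pow_k[OF assms(2)] by simp
  finally show ?thesis using r0 by (simp add: divide_le_eq mult.commute)
qed

definition sgr :: "nat \<Rightarrow> real \<Rightarrow> nat" where
  "sgr r x = (GREATEST s. real (s choose r) \<le> x)"

lemma sgr_props:
  assumes "1 \<le> r" "0 \<le> x"
  shows "real (sgr r x choose r) \<le> x" "\<And>S. real (S choose r) \<le> x \<Longrightarrow> S \<le> sgr r x"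
    "x < real (Suc (sgr r x) choose r)"
proof -
  let ?P = "\<lambda>s. real (s choose r) \<le> x"
  have P0: "?P 0" using assms by (cases r) auto
  have bnd: "y \<le> r + nat \<lceil>real r * x\<rceil>" if "?P y" for y
  proof (cases "y \<le> r")
    case False
    then have "real y \<le> real r * real (y choose r)" using binom_lower assms(1) by simp
    also have "\<dots> \<le> real r * x" using that by (intro mult_left_mono) auto
    finally have "real y \<le> real r * x" .
    then show ?thesis by linarith
  qed simp
  show "?P (sgr r x)" unfolding sgr_def by (rule GreatestI_nat[where P="?P", OF P0 bnd])
  show "\<And>S. ?P S \<Longrightarrow> S \<le> sgr r x" unfolding sgr_def by (rule Greatest_le_nat[where P="?P", OF _ bnd])
  then have "\<not> ?P (Suc (sgr r x))" by fastforce
  then show "x < real (Suc (sgr r x) choose r)" by simp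
qed

lemma eta_bound:
  assumes "1 \<le> r" "0 < x" "r \<le> s" "real (s choose r) \<le> x" "x < real (Suc s choose r)"
  shows "0 \<le> 1 - real (s choose r) / x" "1 - real (s choose r) / x \<le> real r / (real s + 1)"
proof -
  show "0 \<le> 1 - real (s choose r) / x" using assms by simp
  have id: "(Suc s - r) * (Suc s choose r) = Suc s * (s choose r)"
    using binomial_absorb_comp[of "Suc s" r] by simp
  have pos: "real (Suc s choose r) > 0" using assms by simp
  have "real (s choose r) / real (Suc s choose r) = (real s + 1 - real r) / (real s + 1)"
  proof -
    have "real (Suc s - r) * real (Suc s choose r) = (real s + 1) * real (s choose r)"
      using id by (metis of_nat_Suc of_nat_mult add.commute)
    moreover have "real (Suc s - r) = real s + 1 - real r" using assms by simp
    ultimately show ?thesis using pos by (simp add: field_simps)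
  qed
  moreover have "real (s choose r) / real (Suc s choose r) \<le> real (s choose r) / x"
    using assms pos by (intro divide_left_mono) auto
  ultimately have "(real s + 1 - real r) / (real s + 1) \<le> real (s choose r) / x" by simp
  moreover have "1 - (real s + 1 - real r) / (real s + 1) = real r / (real s + 1)"
    by (simp add: field_simps)
  ultimately show "1 - real (s choose r) / x \<le> real r / (real s + 1)" by linarith
qed

lemma s_le_k:
  assumes "1 \<le> r" "r \<le> k" "r \<le> s" "s choose r \<le> k choose r"
  shows "s \<le> k"
proof (rule ccontr)
  assume "\<not> s \<le> k"
  then have "Suc k \<le> s" by simp
  then have A: "Suc k choose r \<le> s choose r" by (rule binomial_right_mono)
  obtain r' where r': "r = Suc r'" using assms(1) by (cases r) auto
  have "Suc k choose r = (k choose r) + (k choose r')" using r' by simp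
  moreover have "0 < k choose r'" using assms r' by (intro zero_less_binomial) simp
  ultimately show False using assms(4) A by linarith
qed

lemma div_lower: "0 < k \<Longrightarrow> real n / real k - 1 \<le> real (n div k)"
proof -
  assume k: "0 < k"
  have "n < (n div k + 1) * k" using k by (metis add.commute div_mult_mod_eq mod_less_divisor nat_add_left_cancel_less
        distrib_right mult_1)
  then have "real n < (real (n div k) + 1) * real k" by (metis of_nat_1 of_nat_add of_nat_less_iff of_nat_mult)
  then have "real n / real k \<le> real (n div k) + 1" using k by (simp add: divide_le_eq)
  then show ?thesis by linarith
qed


lemma powr_big:
  assumes "a > 0" shows "\<forall>\<^sub>F n in sequentially. X \<le> real n powr a"
proof -
  define N0 where "N0 = nat \<lceil>(max X 1) powr (1/a)\<rceil>"
  have "X \<le> real n powr a" if "n \<ge> N0" for n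
  proof -
    have "(max X 1) powr (1/a) \<le> real n" using that unfolding N0_def by linarith
    then have "((max X 1) powr (1/a)) powr a \<le> real n powr a"
      using assms by (intro powr_mono2) auto
    also have "((max X 1) powr (1/a)) powr a = max X 1" using assms by (simp add: powr_powr)
    finally show ?thesis by linarith
  qed
  then show ?thesis unfolding eventually_sequentially by blast
qed

lemma EF_nonempty:
  assumes "rgraph_on r VF EF" "c > 0" "a > 0"
    and "\<forall>\<^sub>F n in sequentially. c * real n powr a \<le> real (ex r VF EF n)"
  shows "EF \<noteq> {}"
proof
  assume EF: "EF = {}"
  have fVF: "finite VF" using assms(1) by (simp add: rgraph_on_def)
  obtain f where f: "bij_betw f VF {0..<card VF}" using ex_bij_betw_finite_nat[OF fVF] by blast
  define M0 where "M0 = (Max {} :: nat)"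
  have "ex r VF EF n = M0" if "n \<ge> card VF" for n
  proof -
    have "contains_copy n E VF EF" for E
    proof -
      have "f ` VF \<subseteq> {..<n}" using f that by (auto simp: bij_betw_def)
      then show ?thesis unfolding contains_copy_def EF using f by (auto simp: bij_betw_def)
    qed
    then show ?thesis unfolding ex_def F_free_def M0_def by simp
  qed
  then have "\<forall>\<^sub>F n in sequentially. ex r VF EF n = M0" unfolding eventually_sequentially by blast
  moreover have "\<forall>\<^sub>F n in sequentially. (real M0 + 1) / c \<le> real n powr a" by (rule powr_big[OF assms(3)])
  ultimately have "\<forall>\<^sub>F n in sequentially. False" using assms(4)
  proof eventually_elim
    case (elim n)
    then have "real M0 + 1 \<le> c * real n powr a" using assms(2) by (simp add: divide_le_eq mult.commute)
    then show False using elim by simp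
  qed
  then show False by simp
qed


lemma x_big:
  assumes "c' > 0" "\<forall>\<^sub>F n in sequentially. d n \<ge> c'" "r \<ge> 1"
  shows "\<forall>\<^sub>F n in sequentially. X \<le> d n * real n / real r"
proof -
  have "\<forall>\<^sub>F n in sequentially. n \<ge> nat \<lceil>X * real r / c'\<rceil>" by (rule eventually_ge_at_top)
  with assms(2) show ?thesis
  proof eventually_elim
    case (elim n)
    then have "X * real r / c' \<le> real n" by linarith
    then have "X * real r \<le> c' * real n" using assms(1) by (simp add: divide_le_eq mult.commute)
    also have "\<dots> \<le> d n * real n" using elim by (intro mult_right_mono) auto
    finally show ?case using assms(3) by (simp add: le_divide_eq)
  qed
qed

lemma Bn_identity:
  fixes n dn r c a :: real
  assumes "n > 0" "dn > 0" "r > 0" "c > 0" "a > 0"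
  shows "n / ((dn * n / r / c) powr (1/a)) = (r * c) powr (1/a) * (n powr (1 - 1/a) * dn powr (-1/a))"
proof -
  have "(dn * n / r / c) powr (1/a) = dn powr (1/a) * n powr (1/a) / (r * c) powr (1/a)"
  proof -
    have "(dn * n / r / c) = (dn * n) / (r * c)" by simp
    then have "(dn * n / r / c) powr (1/a) = (dn * n) powr (1/a) / (r * c) powr (1/a)"
      using assms by (simp add: powr_divide)
    also have "(dn * n) powr (1/a) = dn powr (1/a) * n powr (1/a)" using assms by (intro powr_mult)
    finally show ?thesis .
  qed
  moreover have "n powr (1 - 1/a) = n / n powr (1/a)" using assms by (simp add: powr_diff)
  moreover have "dn powr (-1/a) = 1 / dn powr (1/a)" using assms
    by (metis minus_divide_left powr_minus_divide)
  moreover have "dn powr (1/a) > 0" "n powr (1/a) > 0" "(r * c) powr (1/a) > 0" using assms by simp_all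
  ultimately show ?thesis by (simp add: field_simps)
qed

lemma Bn_power:
  fixes n dn a :: real
  assumes "n > 0" "dn > 0" "a > 0"
  shows "(n powr (1 - 1/a) * dn powr (-1/a)) powr a = n powr (a - 1) / dn"
proof -
  have "(n powr (1 - 1/a) * dn powr (-1/a)) powr a = (n powr (1 - 1/a)) powr a * (dn powr (-1/a)) powr a"
    using assms by (intro powr_mult)
  also have "\<dots> = n powr (a - 1) * dn powr (-1)"
  proof -
    have e: "(1 - 1/a) * a = a - 1" "(-1/a) * a = -1" using assms by (simp_all add: field_simps)
    show ?thesis by (simp only: powr_powr e)
  qed
  also have "\<dots> = n powr (a - 1) / dn" using assms by (simp add: powr_minus_divide)
  finally show ?thesis .
qed


theorem proposition4p1:
  fixes r :: nat and VF :: "nat set" and EF :: "nat set set"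
    and c a :: real and d :: "nat \<Rightarrow> real"
  assumes "r \<ge> 2"
    and "rgraph_on r VF EF"
    and "c > 0" and "a > 0"
    and "\<forall>\<^sub>F n in sequentially. c * real n powr a \<le> real (ex r VF EF n)"
    and "\<exists>c'>0. \<forall>\<^sub>F n in sequentially. d n \<ge> c'"
    and "d \<in> o(\<lambda>n. real n powr (a - 1))"
  shows "\<exists>\<epsilon>>0. \<exists>C>0. \<exists>\<eta>::nat \<Rightarrow> real. \<eta> \<longlonglongrightarrow> 0 \<and>
           (\<forall>\<^sub>F n in sequentially. \<forall>A q.
              is_tester r n VF EF (deg_class r n (d n) (\<eta> n)) \<epsilon> A \<and>
              query_bound r n (deg_class r n (d n) (\<eta> n)) A q \<longrightarrow>
              C * real n powr (1 - 1 / a) * d n powr (- 1 / a) \<le> real q)"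
proof -
  note r2 = assms(1) and FG = assms(2) and c0 = assms(3) and a0 = assms(4) and exb = assms(5)
  obtain c' where c': "c' > 0" "\<forall>\<^sub>F n in sequentially. d n \<ge> c'" using assms(6) by blast
  have EF: "EF \<noteq> {}" by (rule EF_nonempty[OF FG c0 a0 exb])
  have r1: "r \<ge> 1" using r2 by simp
  define v where "v = card VF"
  have fVF: "finite VF" using FG by (simp add: rgraph_on_def)
  obtain e0 where "e0 \<in> EF" using EF by auto
  then have "e0 \<subseteq> VF" "card e0 = r" using FG by (auto simp: rgraph_on_def)
  then have rv: "r \<le> v" unfolding v_def using card_mono[OF fVF] by auto
  have vpos: "v choose r > 0" using rv by (simp add: zero_less_binomial)
  define x where "x = (\<lambda>n. d n * real n / real r)"
  have xbig: "\<forall>\<^sub>F n in sequentially. X \<le> x n" for X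
    unfolding x_def by (rule x_big[OF c' r1])
  define s where "s = (\<lambda>n. sgr r (x n))"
  define \<eta> where "\<eta> = (\<lambda>n. 1 - real (s n choose r) / x n)"
  define y where "y = (\<lambda>n. (x n / c) powr (1/a))"
  define k where "k = (\<lambda>n. nat \<lceil>y n\<rceil>)"
  have sbig: "\<forall>\<^sub>F n in sequentially. S \<le> s n" for S
    using xbig[of "real (S choose r)"] xbig[of 0]
  proof eventually_elim
    case (elim n) then show ?case unfolding s_def using sgr_props(2)[OF r1] by blast
  qed
  have kbig: "\<forall>\<^sub>F n in sequentially. K \<le> k n" for K
    using xbig[of "c * real K powr a"]
  proof eventually_elim
    case (elim n)
    then have "real K powr a \<le> x n / c" using c0 by (simp add: le_divide_eq mult.commute)
    then have "(real K powr a) powr (1/a) \<le> y n" unfolding y_def using a0 by (intro powr_mono2) auto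
    also have "(real K powr a) powr (1/a) = real K" using a0 by (simp add: powr_powr)
    finally show ?case unfolding k_def by linarith
  qed
  have sgr_ok: "real (s n choose r) \<le> x n" "x n < real (Suc (s n) choose r)" if "x n \<ge> 0" for n
    using sgr_props[OF r1 that] unfolding s_def by auto
  have eta_b: "\<forall>\<^sub>F n in sequentially. 0 \<le> \<eta> n \<and> \<eta> n \<le> real r / (real (s n) + 1)"
    using xbig[of 1] sbig[of r]
  proof eventually_elim
    case (elim n)
    then show ?case using eta_bound[OF r1 _ elim(2) sgr_ok] unfolding \<eta>_def by auto
  qed
  have eta_lim: "\<eta> \<longlonglongrightarrow> 0"
  proof (rule tendstoI)
    fix e :: real assume e: "e > 0"
    show "\<forall>\<^sub>F n in sequentially. dist (\<eta> n) 0 < e"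
      using eta_b sbig[of "nat \<lceil>real r / e\<rceil>"]
    proof eventually_elim
      case (elim n)
      then have "real r / e < real (s n) + 1" by linarith
      then have "real r < e * (real (s n) + 1)" using e by (simp add: divide_less_eq mult.commute)
      then have "real r / (real (s n) + 1) < e" by (simp add: divide_less_eq mult.commute)
      then show ?case using elim by simp
    qed
  qed
  define C0 where "C0 = (real r * c) powr (1/a) / 12"
  have C0pos: "C0 > 0" unfolding C0_def using c0 r1 by simp
  define L where "L = 4 / (3 * C0)"
  have Lpos: "L > 0" unfolding L_def using C0pos by simp
  define \<delta> where "\<delta> = 1 / L powr a"
  have \<delta>pos: "\<delta> > 0" unfolding \<delta>_def using Lpos by simp
  have small: "\<forall>\<^sub>F n in sequentially. d n / real n powr (a - 1) < \<delta>"
    using smalloD_tendsto[OF assms(7)] \<delta>pos by (rule order_tendstoD(2))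
  obtain K0 where K0: "\<And>m. m \<ge> K0 \<Longrightarrow> c * real m powr a \<le> real (ex r VF EF m)"
    using exb unfolding eventually_sequentially by blast
  have main: "\<forall>\<^sub>F n in sequentially. \<forall>A q.
              is_tester r n VF EF (deg_class r n (d n) (\<eta> n)) (1 / real (card VF choose r)) A \<and>
              query_bound r n (deg_class r n (d n) (\<eta> n)) A q \<longrightarrow>
              C0 * real n powr (1 - 1 / a) * d n powr (- 1 / a) \<le> real q"
    using c'(2) eventually_ge_at_top[of "1::nat"] sbig[of "max v r"] kbig[of "max K0 r"] xbig[of c] small eta_b
  proof eventually_elim
    case (elim n)
    have dpos: "d n > 0" using elim c' by linarith
    have npos: "real n > 0" using elim by simp
    have xpos: "x n > 0" using elim c0 by linarith
    have sc: "real (s n choose r) \<le> x n" "x n < real (Suc (s n) choose r)" using sgr_ok xpos by auto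
    have ypos: "y n \<ge> 1"
    proof -
      have "1 \<le> x n / c" using elim c0 by simp
      then have "1 powr (1/a) \<le> (x n / c) powr (1/a)" using a0 by (intro powr_mono2) auto
      then show ?thesis unfolding y_def by simp
    qed
    have ky: "y n \<le> real (k n)" "real (k n) \<le> y n + 1"
      unfolding k_def using ypos of_int_ceiling_le_add_one[of "y n"] by linarith+
    have kpos: "k n > 0" using ky ypos by linarith
    have "x n \<le> c * real (k n) powr a"
    proof -
      have "y n powr a \<le> real (k n) powr a" using ky ypos a0 by (intro powr_mono2) auto
      moreover have "y n powr a = x n / c" unfolding y_def using a0 xpos c0 by (simp add: powr_powr)
      ultimately show ?thesis using c0 by (simp add: divide_le_eq mult.commute)
    qed
    also have "\<dots> \<le> real (ex r VF EF (k n))" using K0 elim by simp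
    finally have exk: "s n choose r \<le> ex r VF EF (k n)" using sc by linarith
    have sk: "s n \<le> k n"
    proof (rule s_le_k[OF r1])
      show "r \<le> k n" "r \<le> s n" using elim by auto
      obtain E0 where "rgraph_on r {..<k n} E0" "card E0 = ex r VF EF (k n)"
        using ex_attained[OF EF] by blast
      then have "ex r VF EF (k n) \<le> k n choose r" using rgraph_card_le by metis
      then show "s n choose r \<le> k n choose r" using exk by simp
    qed
    show ?case
    proof (intro allI impI)
      fix A q
      assume AQ: "is_tester r n VF EF (deg_class r n (d n) (\<eta> n)) (1 / real (card VF choose r)) A \<and>
              query_bound r n (deg_class r n (d n) (\<eta> n)) A q"
      have Cls: "\<forall>G. valid_input r n G \<and> card (fst G) = s n choose r \<longrightarrow> deg_class r n (d n) (\<eta> n) G"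
      proof (intro allI impI)
        fix G assume G: "valid_input r n G \<and> card (fst G) = s n choose r"
        have av: "avg_deg r n G = real r * real (s n choose r) / real n" using G by (simp add: avg_deg_def)
        have "(1 - \<eta> n) * d n = avg_deg r n G"
          unfolding av \<eta>_def x_def using dpos npos r1 by (simp add: field_simps)
        moreover have "\<eta> n \<ge> 0" using elim by simp
        moreover have "\<eta> n * d n \<ge> 0" using dpos \<open>\<eta> n \<ge> 0\<close> by simp
        ultimately show "deg_class r n (d n) (\<eta> n) G" unfolding deg_class_def
          by (simp add: algebra_simps)
      qed
      have core_res: "real (n div k n) \<le> 3 * (real q + 1)"
      proof -
        have "card VF \<le> s n" using elim unfolding v_def by simp
        then show ?thesis using core[OF r2 FG EF _ sk kpos exk Cls] AQ by blast
      qed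
      define Bn where "Bn = real n powr (1 - 1 / a) * d n powr (- 1 / a)"
      have Bpos: "Bn > 0" unfolding Bn_def using npos dpos by simp
      have ident: "real n / y n = (real r * c) powr (1/a) * Bn"
        unfolding y_def x_def Bn_def using Bn_identity[OF npos dpos _ c0 a0, of "real r"] r1 by simp
      have BL: "Bn \<ge> L"
      proof (rule ccontr)
        assume "\<not> Bn \<ge> L"
        then have "Bn powr a < L powr a" using Bpos a0 by (intro powr_less_mono2) auto
        moreover have "Bn powr a = real n powr (a - 1) / d n" unfolding Bn_def by (rule Bn_power[OF npos dpos a0])
        moreover have "d n / real n powr (a - 1) < 1 / L powr a" using elim unfolding \<delta>_def by simp
        ultimately show False using npos dpos Lpos
          by (simp add: field_simps)
      qed
      have "real n / real (k n) \<ge> real n / (2 * y n)"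
        using ky ypos npos kpos by (intro divide_left_mono) auto
      then have "real (n div k n) \<ge> real n / (2 * y n) - 1" using div_lower[OF kpos, of n] by linarith
      then have "real q \<ge> real n / y n / 6 - 4/3" using core_res by (simp add: field_simps)
      then have "real q \<ge> 2 * C0 * Bn - 4/3" using ident unfolding C0_def by simp
      moreover have "C0 * Bn \<ge> 4/3" using BL C0pos unfolding L_def
        by (simp add: divide_le_eq mult.commute)
      ultimately have "C0 * Bn \<le> real q" by linarith
      then show "C0 * real n powr (1 - 1 / a) * d n powr (- 1 / a) \<le> real q"
        unfolding Bn_def by (simp add: mult.assoc)
    qed
  qed
  have epos: "1 / real (card VF choose r) > 0" using vpos unfolding v_def by simp
  show ?thesis using epos C0pos eta_lim main by blast
qed

end
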